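(* Consider the input-output system $\dot{\mathbf x}=\mathbf f(\mathbf x)+\hat{\mathbf e}_1 g(u,x_1)$, $u\in J$, with output $x_j$ for some fixed $j$, satisfying assumption (A0). Let $\mathcal J$ be the signed symbolic matrix consistent with $\frac{\partial\mathbf f}{\partial\mathbf x}$. If the polynomial $\mathcal J[\hat 1,\hat j]$ is not identically zero and does not have mixed signs, then the system is not quasi-adaptive and does not exhibit biphasic response.
   Context: $\mathcal X\subset\mathbb R^n$, $J\subset\mathbb R$ an interval, $\mathbf f:\mathcal X\to\mathbb R^n$ is $C^1$, every entry $\partial f_i/\partial x_k$ has constant sign (positive, negative, or identically zero) on $\mathcal X$, and $\partial f_i/\partial x_i<0$. $\hat{\mathbf e}_1$ is the first standard basis vector. The control term $g$ is one of: flow, $g(u,x_1)=u$; activation, $g(u,x_1)=(u+k_{\mathrm{on}})(x_T-x_1)-k_{\mathrm{off}}x_1$; inhibition, $g(u,x_1)=k_{\mathrm{on}}(x_T-x_1)-(u+k_{\mathrm{off}})x_1$, with constants $x_T,k_{\mathrm{on}},k_{\mathrm{off}}>0$; in the activation and inhibition cases the state space satisfies $0\le x_1\le x_T$ and every steady state has $0<x_1<x_T$. Write $\mathbf F(\mathbf x,u)=\mathbf f(\mathbf x)+\hat{\mathbf e}_1g(u,x_1)$. Assumption (A0): for every $u_0\in J$ there is $\mathbf x_0\in\mathcal X$ with $\mathbf F(\mathbf x_0,u_0)=\mathbf 0$ and $\frac{\partial\mathbf F}{\partial\mathbf x}(\mathbf x_0,u_0)$ of full rank; by the implicit function theorem this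 gives continuously differentiable steady-state curves $\mathbf x^*(u)$. The system is quasi-adaptive if, along such a steady-state curve, $\partial_u x_j^*(u_0)=0$ for some $u_0\in J$; it exhibits biphasic response if $\partial_u x_j^*(u_1)\,\partial_u x_j^*(u_2)<0$ for some $u_1,u_2\in J$. The signed symbolic matrix consistent with $\frac{\partial\mathbf f}{\partial\mathbf x}$ is the matrix $\mathcal J$ whose $(i,k)$ entry is $a_{ik}$, $-a_{ik}$ or $0$ (with $a_{ik}$ distinct variables) according as $\partial f_i/\partial x_k$ is positive, negative, or zero. $\mathcal J[\hat 1,\hat j]$ is the minor with row $1$ and column $j$ deleted. A polynomial has mixed signs if, after cancellations, it has monomials with both positive and negative coefficients. *)

theory Defs
  imports "HOL-Analysis.Analysis" "HOL-Library.Poly_Mapping"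
begin

datatype control_kind = Flow | Activation | Inhibition

fun gctrl :: "control_kind \<Rightarrow> real \<Rightarrow> real \<Rightarrow> real \<Rightarrow> real \<Rightarrow> real \<Rightarrow> real" where
  "gctrl Flow xT kon koff u x1 = u"
| "gctrl Activation xT kon koff u x1 = (u + kon) * (xT - x1) - koff * x1"
| "gctrl Inhibition xT kon koff u x1 = kon * (xT - x1) - (u + koff) * x1"

definition first_idx :: "'n::{finite,linorder}" where
  "first_idx = Min UNIV"

definition e1 :: "real^('n::{finite,linorder})" where
  "e1 = axis first_idx 1"

definition Ffield ::
  "(real^('n::{finite,linorder}) \<Rightarrow> real^('n::{finite,linorder})) \<Rightarrow> (real \<Rightarrow> real \<Rightarrow> real) \<Rightarrow> real^('n::{finite,linorder}) \<Rightarrow> real \<Rightarrow> real^('n::{finite,linorder})" where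
  "Ffield f g x u = f x + g u (x $ first_idx) *\<^sub>R e1"

definition pderiv_f :: "(real^('n::{finite,linorder}) \<Rightarrow> real^('n::{finite,linorder}) \<Rightarrow> real^('n::{finite,linorder})) \<Rightarrow> real^('n::{finite,linorder}) \<Rightarrow> 'n \<Rightarrow> 'n \<Rightarrow> real" where
  "pderiv_f f' x i k = f' x (axis k 1) $ i"

definition jacF ::
  "(real^('n::{finite,linorder}) \<Rightarrow> real^('n::{finite,linorder}) \<Rightarrow> real^('n::{finite,linorder})) \<Rightarrow> (real \<Rightarrow> real \<Rightarrow> real) \<Rightarrow> real^('n::{finite,linorder}) \<Rightarrow> real \<Rightarrow> real^('n::{finite,linorder})^('n::{finite,linorder})" where
  "jacF f' g x u = (\<chi> i k. pderiv_f f' x i k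
      + (if i = first_idx \<and> k = first_idx then deriv (g u) (x $ first_idx) else 0))"

definition A0 ::
  "(real^('n::{finite,linorder}) \<Rightarrow> real^('n::{finite,linorder})) \<Rightarrow> (real^('n::{finite,linorder}) \<Rightarrow> real^('n::{finite,linorder}) \<Rightarrow> real^('n::{finite,linorder})) \<Rightarrow> (real \<Rightarrow> real \<Rightarrow> real)
   \<Rightarrow> (real^('n::{finite,linorder})) set \<Rightarrow> real set \<Rightarrow> bool" where
  "A0 f f' g X J \<longleftrightarrow> (\<forall>u0\<in>J. \<exists>x0\<in>X. Ffield f g x0 u0 = 0 \<and> rank (jacF f' g x0 u0) = CARD('n))"

text \<open>A continuously differentiable steady-state curve xs (with derivative xs') on a
  nondegenerate interval I \<subseteq> J, along which dF/dx has full rank (as produced by the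
  implicit function theorem from (A0)).\<close>
definition steady_state_curve ::
  "(real^('n::{finite,linorder}) \<Rightarrow> real^('n::{finite,linorder})) \<Rightarrow> (real^('n::{finite,linorder}) \<Rightarrow> real^('n::{finite,linorder}) \<Rightarrow> real^('n::{finite,linorder})) \<Rightarrow> (real \<Rightarrow> real \<Rightarrow> real)
   \<Rightarrow> (real^('n::{finite,linorder})) set \<Rightarrow> real set \<Rightarrow> real set
   \<Rightarrow> (real \<Rightarrow> real^('n::{finite,linorder})) \<Rightarrow> (real \<Rightarrow> real^('n::{finite,linorder})) \<Rightarrow> bool" where
  "steady_state_curve f f' g X J I xs xs' \<longleftrightarrow>
     is_interval I \<and> interior I \<noteq> {} \<and> I \<subseteq> J \<and>
     (\<forall>u\<in>I. xs u \<in> X \<and> Ffield f g (xs u) u = 0 \<and> rank (jacF f' g (xs u) u) = CARD('n)) \<and>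
     (\<forall>u\<in>I. (xs has_vector_derivative xs' u) (at u within I)) \<and>
     continuous_on I xs'"

text \<open>Quasi-adaptation and biphasic response of output x_j along a steady-state curve on I
  (xs' u $ j is the derivative of x_j^* at u).\<close>
definition quasi_adaptive :: "real set \<Rightarrow> (real \<Rightarrow> real^('n::{finite,linorder})) \<Rightarrow> 'n \<Rightarrow> bool" where
  "quasi_adaptive I xs' j \<longleftrightarrow> (\<exists>u0\<in>I. xs' u0 $ j = 0)"

definition biphasic :: "real set \<Rightarrow> (real \<Rightarrow> real^('n::{finite,linorder})) \<Rightarrow> 'n \<Rightarrow> bool" where
  "biphasic I xs' j \<longleftrightarrow> (\<exists>u1\<in>I. \<exists>u2\<in>I. xs' u1 $ j * xs' u2 $ j < 0)"

text \<open>Polynomials with integer coefficients in the variables a_ik, (i,k) \<in> 'n \<times> 'n: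
  a monomial is a finitely supported exponent map, a polynomial a finitely supported
  coefficient map on monomials (ring structure from HOL-Library.Poly_Mapping).\<close>
type_synonym 'n spoly = "(('n \<times> 'n) \<Rightarrow>\<^sub>0 nat) \<Rightarrow>\<^sub>0 int"

definition svar :: "'n \<Rightarrow> 'n \<Rightarrow> 'n spoly" where
  "svar i k = Poly_Mapping.single (Poly_Mapping.single (i, k) 1) 1"

definition signed_symbolic_matrix :: "('n \<Rightarrow> 'n \<Rightarrow> int) \<Rightarrow> 'n \<Rightarrow> 'n \<Rightarrow> 'n spoly" where
  "signed_symbolic_matrix s i k =
     (if s i k > 0 then svar i k else if s i k < 0 then - svar i k else 0)"

text \<open>The minor M[\<hat>r,\<hat>c]: determinant of the (n-1)x(n-1) matrix obtained by deleting
  row r and column c, rows/columns kept in their original order.\<close>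
definition minor_poly :: "('n::{finite,linorder} \<Rightarrow> 'n \<Rightarrow> 'n spoly) \<Rightarrow> 'n \<Rightarrow> 'n \<Rightarrow> 'n spoly" where
  "minor_poly M r c =
     (let rs = sorted_list_of_set (UNIV - {r}); cs = sorted_list_of_set (UNIV - {c});
          m = CARD('n) - 1
      in \<Sum>p\<in>{p. p permutes {0..<m}}. of_int (sign p) * (\<Prod>a\<in>{0..<m}. M (rs ! a) (cs ! p a)))"

definition mixed_signs :: "'n spoly \<Rightarrow> bool" where
  "mixed_signs P \<longleftrightarrow> (\<exists>m1 m2. Poly_Mapping.lookup P m1 > 0 \<and> Poly_Mapping.lookup P m2 < 0)"

end

theory Submission
  imports Defs "Jordan_Normal_Form.Determinant"
begin

lemma cramer_minor_nat:
  fixes A :: "nat \<Rightarrow> nat \<Rightarrow> real" and v :: "nat \<Rightarrow> real"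
  assumes k: "k < n"
    and sys: "\<forall>i<n. (\<Sum>l<n. A i l * v l) = (if i = 0 then \<beta> else 0)"
  shows "v k * Determinant.det (mat n n (\<lambda>(i,l). A i l)) =
     \<beta> * (-1)^k * (\<Sum>p\<in>{p. p permutes {0..<n-1}}. of_int (sign p) *
        (\<Prod>a=0..<n-1. A (Suc a) (if p a < k then p a else Suc (p a))))"
proof -
  define M where "M = mat n n (\<lambda>(i,l). A i l)"
  define x where "x = vec n v"
  have M: "M \<in> carrier_mat n n" unfolding M_def by simp
  have x: "x \<in> carrier_vec n" unfolding x_def by simp
  have Mx: "M *\<^sub>v x = vec n (\<lambda>i. if i = 0 then \<beta> else 0)"
  proof (rule eq_vecI)
    fix i assume i: "i < dim_vec (vec n (\<lambda>i. if i = 0 then \<beta> else 0))"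
    hence i': "i < n" by simp
    have "(M *\<^sub>v x) $ i = (\<Sum>l<n. A i l * v l)"
      using i' unfolding M_def x_def by (simp add: scalar_prod_def Matrix.row_def lessThan_atLeast0)
    then show "(M *\<^sub>v x) $ i = vec n (\<lambda>i. if i = 0 then \<beta> else 0) $ i"
      using sys i' by simp
  qed (simp add: M_def)
  define R where "R = replace_col M (M *\<^sub>v x) k"
  have R: "R \<in> carrier_mat n n" unfolding R_def replace_col_def using M by auto
  have "x $ k * Determinant.det M = Determinant.det R"
    using cramer_lemma_mat[OF M x k] unfolding R_def by simp
  also have "\<dots> = (\<Sum>i<n. R $$ (i,k) * cofactor R i k)"
    by (rule laplace_expansion_column[OF R k])
  also have "\<dots> = (\<Sum>i<n. (if i = 0 then \<beta> * cofactor R 0 k else 0))"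
    using M k by (intro sum.cong, simp, auto simp: R_def replace_col_def Mx)
  also have "\<dots> = \<beta> * cofactor R 0 k" using k by simp
  also have "mat_delete R 0 k = mat (n-1) (n-1) (\<lambda>(i,l). A (Suc i) (if l < k then l else Suc l))"
    by (rule eq_matI, auto simp: mat_delete_def R_def replace_col_def M_def)
  hence "cofactor R 0 k = (-1)^k * (\<Sum>p\<in>{p. p permutes {0..<n-1}}. of_int (sign p) *
        (\<Prod>a=0..<n-1. A (Suc a) (if p a < k then p a else Suc (p a))))"
    unfolding cofactor_def
    apply simp
    apply (subst det_def'[of _ "n-1"], simp)
    apply (rule sum.cong, simp, rule arg_cong[where f="\<lambda>t. _ * t"])
    apply (rule prod.cong, simp)
    apply (auto simp: permutes_in_image)
    done
  finally show ?thesis unfolding M_def x_def using k by simp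
qed


definition minor_val :: "('n::{finite,linorder} \<Rightarrow> 'n \<Rightarrow> real) \<Rightarrow> 'n \<Rightarrow> 'n \<Rightarrow> real" where
  "minor_val M r c =
     (let rs = sorted_list_of_set (UNIV - {r}); cs = sorted_list_of_set (UNIV - {c});
          m = CARD('n) - 1
      in \<Sum>p\<in>{p. p permutes {0..<m}}. of_int (sign p) * (\<Prod>a\<in>{0..<m}. M (rs ! a) (cs ! p a)))"

lemma remove1_nth:
  assumes d: "distinct xs" and k: "k < length xs" and b: "b < length xs - 1"
  shows "remove1 (xs ! k) xs ! b = xs ! (if b < k then b else Suc b)"
proof -
  have xs: "xs = take k xs @ xs ! k # drop (Suc k) xs" using k by (simp add: id_take_nth_drop)
  have nin: "xs ! k \<notin> set (take k xs)"
    using d xs by (metis distinct_append distinct.simps(2) disjoint_iff list.set_intros(1))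
  have r: "remove1 (xs ! k) xs = take k xs @ drop (Suc k) xs"
    by (subst xs, simp add: remove1_append nin)
  show ?thesis unfolding r using k b by (auto simp: nth_append)
qed

lemma el_facts:
  defines "el \<equiv> sorted_list_of_set (UNIV::'n::{finite,linorder} set)"
  shows "length el = CARD('n)" "distinct el" "set el = UNIV" "el ! 0 = first_idx"
    "sorted_list_of_set (UNIV - {first_idx}) = tl el"
proof -
  show "length el = CARD('n)" "distinct el" "set el = UNIV" unfolding el_def by auto
  have e: "el = Min UNIV # sorted_list_of_set (UNIV - {Min UNIV})"
    unfolding el_def by (rule sorted_list_of_set_nonempty, auto)
  show "el ! 0 = first_idx" by (subst e, simp add: first_idx_def)
  show "sorted_list_of_set (UNIV - {first_idx}) = tl el" by (subst e, simp add: first_idx_def)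
qed

lemma cramer_minor:
  fixes A :: "'n::{finite,linorder} \<Rightarrow> 'n \<Rightarrow> real" and v :: "'n \<Rightarrow> real"
  assumes sys: "\<forall>i. (\<Sum>l\<in>UNIV. A i l * v l) = (if i = first_idx then \<beta> else 0)"
    and beta: "\<beta> \<noteq> 0" and mv: "minor_val A first_idx j \<noteq> 0"
  shows "v j \<noteq> 0"
proof -
  define el where "el = sorted_list_of_set (UNIV::'n set)"
  define n where "n = CARD('n)"
  have ef: "length el = CARD('n)" "distinct el" "set el = UNIV" "el ! 0 = first_idx"
    "sorted_list_of_set (UNIV - {first_idx}) = tl el" unfolding el_def using el_facts by auto
  have len: "length el = n" using ef n_def by simp
  have bij: "bij_betw ((!) el) {..<n} UNIV" using ef len by (intro bij_betw_nth) auto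
  obtain k where k: "k < n" "el ! k = j"
    using ef len by (metis in_set_conv_nth UNIV_I)
  have n0: "n > 0" unfolding n_def by simp
  define B where "B = (\<lambda>i l. A (el ! i) (el ! l))"
  define w where "w = (\<lambda>l. v (el ! l))"
  have sys': "\<forall>i<n. (\<Sum>l<n. B i l * w l) = (if i = 0 then \<beta> else 0)"
  proof (intro allI impI)
    fix i assume i: "i < n"
    have "(\<Sum>l<n. B i l * w l) = (\<Sum>l\<in>UNIV. A (el ! i) l * v l)"
      unfolding B_def w_def using sum.reindex_bij_betw[OF bij, of "\<lambda>l. A (el ! i) l * v l"] by simp
    also have "\<dots> = (if el ! i = first_idx then \<beta> else 0)" using sys by simp
    also have "(el ! i = first_idx) = (i = 0)"
      using ef(2,4) i n0 len by (metis nth_eq_iff_index_eq)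
    finally show "(\<Sum>l<n. B i l * w l) = (if i = 0 then \<beta> else 0)" .
  qed
  have eq: "w k * Determinant.det (mat n n (\<lambda>(i,l). B i l)) =
     \<beta> * (-1)^k * (\<Sum>p\<in>{p. p permutes {0..<n-1}}. of_int (sign p) *
        (\<Prod>a=0..<n-1. B (Suc a) (if p a < k then p a else Suc (p a))))"
    by (rule cramer_minor_nat[OF k(1) sys'])
  have "(\<Sum>p\<in>{p. p permutes {0..<n-1}}. of_int (sign p) *
        (\<Prod>a=0..<n-1. B (Suc a) (if p a < k then p a else Suc (p a)))) = minor_val A first_idx j"
    unfolding minor_val_def Let_def ef(5) sorted_list_of_set_remove[OF finite[of UNIV], of j]
      el_def[symmetric] n_def[symmetric] B_def
  proof (intro sum.cong refl arg_cong[where f="\<lambda>t. _ * t"] prod.cong)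
    fix p a assume p: "p \<in> {p. p permutes {0..<n-1}}" and a: "a \<in> {0..<n-1}"
    have pa: "p a < n - 1" using p a permutes_in_image by fastforce
    show "A (el ! Suc a) (el ! (if p a < k then p a else Suc (p a))) = A (tl el ! a) (remove1 j el ! p a)"
      using remove1_nth[OF ef(2), of k "p a"] k pa a len by (simp add: nth_tl)
  qed
  with eq have "w k * Determinant.det (mat n n (\<lambda>(i,l). B i l)) = \<beta> * (-1)^k * minor_val A first_idx j"
    by simp
  moreover have "\<beta> * (-1)^k * minor_val A first_idx j \<noteq> 0" using beta mv by simp
  ultimately have "w k \<noteq> 0" by auto
  thus ?thesis unfolding w_def using k by simp
qed


lemma prod_single:
  fixes mm :: "'i \<Rightarrow> 'm::comm_monoid_add" and cc :: "'i \<Rightarrow> 'c::comm_semiring_1"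
  assumes "finite S"
  shows "(\<Prod>a\<in>S. Poly_Mapping.single (mm a) (cc a)) = Poly_Mapping.single (\<Sum>a\<in>S. mm a) (\<Prod>a\<in>S. cc a)"
  using assms by (induction S rule: finite_induct) (auto simp: mult_single)

lemma group_pos:
  fixes Q :: "'p set" and mm :: "'p \<Rightarrow> 'm" and cc :: "'p \<Rightarrow> int" and w :: "'m \<Rightarrow> real"
  assumes Q: "finite Q" and P: "P = (\<Sum>p\<in>Q. Poly_Mapping.single (mm p) (cc p))"
    and nz: "P \<noteq> 0" and nn: "\<forall>m. Poly_Mapping.lookup P m \<ge> 0" and wpos: "\<forall>m. w m > 0"
  shows "(\<Sum>p\<in>Q. of_int (cc p) * w (mm p)) > 0"
proof -
  have lk: "Poly_Mapping.lookup P m = (\<Sum>p\<in>{p\<in>Q. mm p = m}. cc p)" for m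
    unfolding P lookup_sum lookup_single using Q
    by (simp add: sum.inter_filter when_def eq_commute)
  obtain m0 where m0: "Poly_Mapping.lookup P m0 \<noteq> 0"
    using nz poly_mapping_eqI[of P 0] by auto
  have m0Q: "m0 \<in> mm ` Q"
  proof (rule ccontr)
    assume "m0 \<notin> mm ` Q"
    hence "{p\<in>Q. mm p = m0} = {}" by auto
    thus False using m0 lk[of m0] by (metis sum.empty)
  qed
  have "(\<Sum>p\<in>Q. of_int (cc p) * w (mm p)) = (\<Sum>m\<in>mm ` Q. (\<Sum>p\<in>{p\<in>Q. mm p = m}. of_int (cc p) * w (mm p)))"
    by (rule sum.image_gen[OF Q])
  also have "\<dots> = (\<Sum>m\<in>mm ` Q. of_int (Poly_Mapping.lookup P m) * w m)"
    unfolding lk by (intro sum.cong refl) (simp add: sum_distrib_right)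
  also have "\<dots> > 0"
  proof (rule sum_pos2[OF _ m0Q])
    show "finite (mm ` Q)" using Q by simp
    show "0 < real_of_int (Poly_Mapping.lookup P m0) * w m0"
      using m0 nn wpos by (metis mult_pos_pos of_int_0_less_iff order_le_neq_trans)
    show "0 \<le> real_of_int (Poly_Mapping.lookup P i) * w i" if "i \<in> mm ` Q" for i
      using nn wpos by (simp add: less_imp_le)
  qed
  finally show ?thesis .
qed

lemma group_nonzero:
  fixes Q :: "'p set" and mm :: "'p \<Rightarrow> 'm" and cc :: "'p \<Rightarrow> int" and w :: "'m \<Rightarrow> real"
  assumes Q: "finite Q" and P: "P = (\<Sum>p\<in>Q. Poly_Mapping.single (mm p) (cc p))"
    and nz: "P \<noteq> 0" and nm: "\<not> (\<exists>m1 m2. Poly_Mapping.lookup P m1 > 0 \<and> Poly_Mapping.lookup P m2 < 0)"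
    and wpos: "\<forall>m. w m > 0"
  shows "(\<Sum>p\<in>Q. of_int (cc p) * w (mm p)) \<noteq> 0"
proof (cases "\<forall>m. Poly_Mapping.lookup P m \<ge> 0")
  case True
  show ?thesis using group_pos[OF Q P nz True wpos] by simp
next
  case False
  hence nn: "\<forall>m. Poly_Mapping.lookup (-P) m \<ge> 0" using nm by (metis le_less_linear lookup_uminus neg_0_le_iff_le)
  have P': "-P = (\<Sum>p\<in>Q. Poly_Mapping.single (mm p) (- cc p))"
    unfolding P by (simp add: single_uminus sum_negf)
  have "(\<Sum>p\<in>Q. of_int (- cc p) * w (mm p)) > 0"
    using group_pos[OF Q P' _ nn wpos] nz by simp
  thus ?thesis by (simp add: sum_negf)
qed


lemma prod_as_mono:
  fixes f :: "'v::finite \<Rightarrow> real" and x :: "'a \<Rightarrow> 'v"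
  assumes S: "finite S"
  shows "(\<Prod>a\<in>S. f (x a)) = (\<Prod>v\<in>UNIV. f v ^ Poly_Mapping.lookup (\<Sum>a\<in>S. Poly_Mapping.single (x a) (1::nat)) v)"
proof -
  have "(\<Prod>v\<in>UNIV. f v ^ Poly_Mapping.lookup (\<Sum>a\<in>S. Poly_Mapping.single (x a) (1::nat)) v)
      = (\<Prod>v\<in>UNIV. \<Prod>a\<in>S. f v ^ (if x a = v then 1 else 0))"
    apply (simp add: lookup_sum lookup_single when_def power_sum)
    apply (rule prod.cong[OF refl])+
    by auto
  also have "\<dots> = (\<Prod>a\<in>S. \<Prod>v\<in>UNIV. f v ^ (if x a = v then 1 else 0))"
    by (rule prod.swap)
  also have "\<dots> = (\<Prod>a\<in>S. f (x a))"
  proof (rule prod.cong[OF refl])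
    fix a
    have "(\<Prod>v\<in>UNIV. f v ^ (if x a = v then 1 else 0)) = (\<Prod>v\<in>UNIV. if x a = v then f v else 1)"
      by (rule prod.cong) auto
    also have "\<dots> = f (x a)" by (simp add: prod.delta)
    finally show "(\<Prod>v\<in>UNIV. f v ^ (if x a = v then 1 else 0)) = f (x a)" .
  qed
  finally show ?thesis by simp
qed

lemma minor_val_nonzero:
  fixes s :: "'n::{finite,linorder} \<Rightarrow> 'n \<Rightarrow> int" and A :: "'n \<Rightarrow> 'n \<Rightarrow> real"
  assumes sp: "\<forall>i k. s i k \<in> {-1,0,1}" and sg: "\<forall>i k. sgn (A i k) = of_int (s i k)"
    and nz: "minor_poly (signed_symbolic_matrix s) r c \<noteq> 0"
    and nm: "\<not> mixed_signs (minor_poly (signed_symbolic_matrix s) r c)"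
  shows "minor_val A r c \<noteq> 0"
proof -
  define rs where "rs = sorted_list_of_set (UNIV - {r})"
  define cs where "cs = sorted_list_of_set (UNIV - {c})"
  define m where "m = CARD('n) - 1"
  define Q where "Q = {p. p permutes {0..<m}}"
  define mm where "mm = (\<lambda>p. \<Sum>a\<in>{0..<m}. Poly_Mapping.single (rs ! a, cs ! p a) (1::nat))"
  define cc where "cc = (\<lambda>p. sign p * (\<Prod>a\<in>{0..<m}. s (rs ! a) (cs ! p a)))"
  define w where "w = (\<lambda>(i,k). if A i k = 0 then 1 else \<bar>A i k\<bar>)"
  define W where "W = (\<lambda>mon. \<Prod>v\<in>UNIV. w v ^ Poly_Mapping.lookup mon v)"
  have Qf: "finite Q" unfolding Q_def by (simp add: finite_permutations)
  have ssm: "signed_symbolic_matrix s i k = Poly_Mapping.single (Poly_Mapping.single (i,k) 1) (s i k)" for i k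
    using sp[rule_format, of i k] by (auto simp: signed_symbolic_matrix_def svar_def single_uminus)
  have sgnp: "(of_int (sign p) :: ('n \<times> 'n \<Rightarrow>\<^sub>0 nat) \<Rightarrow>\<^sub>0 int) = Poly_Mapping.single 0 (sign p)" for p
    by (metis single_of_int of_int_eq_id id_apply)
  have P: "minor_poly (signed_symbolic_matrix s) r c = (\<Sum>p\<in>Q. Poly_Mapping.single (mm p) (cc p))"
    unfolding minor_poly_def Let_def rs_def[symmetric] cs_def[symmetric] m_def[symmetric] Q_def[symmetric]
  proof (rule sum.cong[OF refl])
    fix p
    show "of_int (sign p) * (\<Prod>a = 0..<m. signed_symbolic_matrix s (rs ! a) (cs ! p a)) =
        Poly_Mapping.single (mm p) (cc p)"
      unfolding ssm prod_single[OF finite_atLeastLessThan] sgnp mult_single mm_def cc_def by simp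
  qed
  have wpos: "\<forall>v. w v > 0" unfolding w_def by auto
  have Wpos: "\<forall>mon. W mon > 0" unfolding W_def using wpos by (auto intro: prod_pos)
  have Aeq: "A i k = of_int (s i k) * w (i,k)" for i k
  proof -
    have "sgn (A i k) = of_int (s i k)" using sg by simp
    thus ?thesis unfolding w_def by (cases "A i k = 0") (auto simp: sgn_mult_abs, metis sgn_mult_abs)
  qed
  have V: "minor_val A r c = (\<Sum>p\<in>Q. of_int (cc p) * W (mm p))"
    unfolding minor_val_def Let_def rs_def[symmetric] cs_def[symmetric] m_def[symmetric] Q_def[symmetric]
  proof (rule sum.cong[OF refl])
    fix p
    have "(\<Prod>a = 0..<m. A (rs ! a) (cs ! p a)) =
         (\<Prod>a = 0..<m. of_int (s (rs ! a) (cs ! p a))) * (\<Prod>a = 0..<m. w (rs ! a, cs ! p a))"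
      unfolding Aeq by (simp add: prod.distrib)
    also have "(\<Prod>a = 0..<m. w (rs ! a, cs ! p a)) = W (mm p)"
      unfolding W_def mm_def by (rule prod_as_mono) simp
    finally show "real_of_int (sign p) * (\<Prod>a = 0..<m. A (rs ! a) (cs ! p a)) = of_int (cc p) * W (mm p)"
      unfolding cc_def by simp
  qed
  show ?thesis unfolding V
    by (rule group_nonzero[OF Qf P nz _ Wpos]) (use nm in \<open>simp add: mixed_signs_def\<close>)
qed


lemma minor_val_row_indep:
  assumes "\<And>i k. i \<noteq> r \<Longrightarrow> A i k = B i k"
  shows "minor_val A r c = minor_val B r c"
  unfolding minor_val_def Let_def
proof (intro sum.cong refl arg_cong[where f="\<lambda>t. _ * t"] prod.cong)
  fix a assume a: "a \<in> {0..<CARD('a) - 1}"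
  let ?rs = "sorted_list_of_set (UNIV - {r})"
  have "length ?rs = CARD('a) - 1" by simp
  hence "?rs ! a \<in> set ?rs" using a by (intro nth_mem) simp
  moreover have "set ?rs = UNIV - {r}" by (rule set_sorted_list_of_set) simp
  ultimately have "?rs ! a \<noteq> r" by auto
  thus "A (?rs ! a) (sorted_list_of_set (UNIV - {c}) ! x a) = B (?rs ! a) (sorted_list_of_set (UNIV - {c}) ! x a)" for x
    using assms by simp
qed

lemma linear_comp_sum:
  fixes L :: "real^'n \<Rightarrow> real^'n"
  assumes "linear L"
  shows "L v $ i = (\<Sum>k\<in>UNIV. (L (axis k 1) $ i) * v $ k)"
proof -
  have "v = (\<Sum>k\<in>UNIV. v $ k *\<^sub>R axis k 1)"
    using basis_expansion[of v] by (simp add: scalar_mult_eq_scaleR)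
  hence "L v = (\<Sum>k\<in>UNIV. v $ k *\<^sub>R L (axis k 1))"
    by (metis (no_types, lifting) assms linear_scale linear_sum sum.cong)
  thus ?thesis by (simp add: sum_component mult.commute)
qed


lemma act_deriv:
  fixes x1 :: "real \<Rightarrow> real"
  assumes x1d: "(x1 has_real_derivative d) (at u within I)"
  shows "((\<lambda>t. (t + kon) * (xT - x1 t) - koff * x1 t) has_real_derivative ((xT - x1 u) + (-(u + kon) - koff) * d)) (at u within I)"
  by (rule derivative_eq_intros refl x1d | simp add: algebra_simps)+

lemma inh_deriv:
  fixes x1 :: "real \<Rightarrow> real"
  assumes x1d: "(x1 has_real_derivative d) (at u within I)"
  shows "((\<lambda>t. kon * (xT - x1 t) - (t + koff) * x1 t) has_real_derivative (- x1 u + (-kon - (u + koff)) * d)) (at u within I)"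
  by (rule derivative_eq_intros refl x1d | simp add: algebra_simps)+

lemma flow_deriv: "((\<lambda>t. t) has_real_derivative (1 + 0 * d)) (at u within I)"
  by (rule derivative_eq_intros refl | simp)+

theorem lemma9:
  fixes f :: "real^('n::{finite,linorder}) \<Rightarrow> real^('n::{finite,linorder})"
    and f' :: "real^('n::{finite,linorder}) \<Rightarrow> real^('n::{finite,linorder}) \<Rightarrow> real^('n::{finite,linorder})"
    and X :: "(real^('n::{finite,linorder})) set" and J :: "real set"
    and s :: "'n \<Rightarrow> 'n \<Rightarrow> int"
    and c :: control_kind and xT kon koff :: real
    and j :: 'n
  assumes J_interval: "is_interval J" "interior J \<noteq> {}"
    and f_deriv: "\<forall>x\<in>X. (f has_derivative f' x) (at x within X)"
    and f_C1: "\<forall>i k. continuous_on X (\<lambda>x. pderiv_f f' x i k)"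
    and sign_pattern: "\<forall>i k. s i k \<in> {-1, 0, 1}"
    and const_sign: "\<forall>x\<in>X. \<forall>i k. sgn (pderiv_f f' x i k) = of_int (s i k)"
    and diag_neg: "\<forall>x\<in>X. \<forall>i. pderiv_f f' x i i < 0"
    and ctrl: "c \<noteq> Flow \<Longrightarrow> xT > 0 \<and> kon > 0 \<and> koff > 0
                 \<and> (\<forall>x\<in>X. 0 \<le> x $ first_idx \<and> x $ first_idx \<le> xT)
                 \<and> (\<forall>x\<in>X. \<forall>u\<in>J. Ffield f (gctrl c xT kon koff) x u = 0
                        \<longrightarrow> 0 < x $ first_idx \<and> x $ first_idx < xT)"
    and A0: "A0 f f' (gctrl c xT kon koff) X J"
    and nonzero: "minor_poly (signed_symbolic_matrix s) first_idx j \<noteq> 0"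
    and not_mixed: "\<not> mixed_signs (minor_poly (signed_symbolic_matrix s) first_idx j)"
  shows "\<forall>I xs xs'. steady_state_curve f f' (gctrl c xT kon koff) X J I xs xs' \<longrightarrow>
            \<not> quasi_adaptive I xs' j \<and> \<not> biphasic I xs' j"
proof (intro allI impI)
  fix I xs xs'
  assume ssc: "steady_state_curve f f' (gctrl c xT kon koff) X J I xs xs'"
  let ?g = "gctrl c xT kon koff"
  let ?i0 = "first_idx :: 'n"
  have Iint: "is_interval I" and Iint2: "interior I \<noteq> {}" and IJ: "I \<subseteq> J"
    and ss: "\<And>u. u \<in> I \<Longrightarrow> xs u \<in> X \<and> Ffield f ?g (xs u) u = 0"
    and xsd: "\<And>u. u \<in> I \<Longrightarrow> (xs has_vector_derivative xs' u) (at u within I)"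
    and xsc: "continuous_on I xs'"
    using ssc unfolding steady_state_curve_def by auto
  have nz: "xs' u $ j \<noteq> 0" if u: "u \<in> I" for u
  proof -
    define x where "x = xs u"
    define v where "v = xs' u"
    have xX: "x \<in> X" and F0: "Ffield f ?g x u = 0" using ss[OF u] x_def by auto
    have uJ: "u \<in> J" using u IJ by auto
    define gu where "gu = (case c of Flow \<Rightarrow> 1 | Activation \<Rightarrow> xT - x $ ?i0 | Inhibition \<Rightarrow> - x $ ?i0)"
    define gx where "gx = (case c of Flow \<Rightarrow> 0 | Activation \<Rightarrow> -(u + kon) - koff | Inhibition \<Rightarrow> -kon - (u + koff))"
    have x1d: "((\<lambda>t. xs t $ ?i0) has_real_derivative v $ ?i0) (at u within I)"
      using bounded_linear.has_vector_derivative[OF bounded_linear_vec_nth xsd[OF u], of ?i0]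
      unfolding v_def has_real_derivative_iff_has_vector_derivative by simp
    have Gd: "((\<lambda>t. ?g t (xs t $ ?i0)) has_real_derivative (gu + gx * v $ ?i0)) (at u within I)"
    proof (cases c)
      case Flow
      then show ?thesis unfolding gu_def gx_def using flow_deriv by simp
    next
      case Activation
      then show ?thesis unfolding gu_def gx_def x_def using act_deriv[OF x1d] by simp
    next
      case Inhibition
      then show ?thesis unfolding gu_def gx_def x_def using inh_deriv[OF x1d] by simp
    qed
    have fd: "((f \<circ> xs) has_vector_derivative f' x v) (at u within I)"
    proof (rule vector_derivative_diff_chain_within[of xs v u I f "f' x"])
      show "(xs has_vector_derivative v) (at u within I)" using xsd[OF u] v_def by simp
      have "xs ` I \<subseteq> X" using ss by auto
      thus "(f has_derivative f' x) (at (xs u) within xs ` I)"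
        using f_deriv xX x_def has_derivative_subset by blast
    qed
    have hd: "((\<lambda>t. Ffield f ?g (xs t) t) has_vector_derivative (f' x v + (gu + gx * v $ ?i0) *\<^sub>R e1)) (at u within I)"
    proof -
      have "((\<lambda>t. f (xs t) + ?g t (xs t $ ?i0) *\<^sub>R e1) has_vector_derivative
          (f' x v + (?g u (xs u $ ?i0) *\<^sub>R 0 + (gu + gx * v $ ?i0) *\<^sub>R e1))) (at u within I)"
      proof (rule has_vector_derivative_add)
        show "((\<lambda>t. f (xs t)) has_vector_derivative f' x v) (at u within I)" using fd by (simp add: o_def)
        show "((\<lambda>t. ?g t (xs t $ ?i0) *\<^sub>R e1) has_vector_derivative
          (?g u (xs u $ ?i0) *\<^sub>R 0 + (gu + gx * v $ ?i0) *\<^sub>R e1)) (at u within I)"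
          by (rule has_vector_derivative_scaleR[OF Gd has_vector_derivative_const])
      qed
      thus ?thesis unfolding Ffield_def by simp
    qed
    have h0: "((\<lambda>t. Ffield f ?g (xs t) t) has_vector_derivative 0) (at u within I)"
      by (rule has_vector_derivative_transform[OF u _ has_vector_derivative_const]) (use ss in auto)
    have nb: "at u within I \<noteq> bot"
    proof -
      have "connected I" using Iint is_interval_connected by blast
      moreover have "I \<noteq> {y}" for y using Iint2 by auto
      ultimately have "u islimpt I" using connected_imp_perfect u by blast
      thus ?thesis using trivial_limit_within by blast
    qed
    have D0: "f' x v + (gu + gx * v $ ?i0) *\<^sub>R e1 = 0"
      using vector_derivative_unique_within[OF nb hd h0] .
    have lin: "linear (f' x)" using f_deriv xX has_derivative_linear by blast
    define A where "A = (\<lambda>i k. pderiv_f f' x i k + (if i = ?i0 \<and> k = ?i0 then gx else 0))"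
    have sys: "\<forall>i. (\<Sum>k\<in>UNIV. A i k * v $ k) = (if i = ?i0 then - gu else 0)"
    proof
      fix i
      have c0: "(f' x v) $ i + (if i = ?i0 then gu + gx * v $ ?i0 else 0) = 0"
      proof -
        have a: "(f' x v) $ i + (gu + gx * v $ ?i0) * e1 $ i = 0"
          using arg_cong[OF D0, of "\<lambda>w. w $ i"] by simp
        have e: "e1 $ i = (if i = ?i0 then 1 else 0)" unfolding e1_def axis_def by simp
        show ?thesis using a unfolding e by (cases "i = ?i0") simp_all
      qed
      have "(\<Sum>k\<in>UNIV. A i k * v $ k) = (\<Sum>k\<in>UNIV. pderiv_f f' x i k * v $ k)
             + (\<Sum>k\<in>UNIV. (if i = ?i0 \<and> k = ?i0 then gx else 0) * v $ k)"
        unfolding A_def by (simp add: distrib_right sum.distrib)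
      also have "(\<Sum>k\<in>UNIV. pderiv_f f' x i k * v $ k) = (f' x v) $ i"
        unfolding pderiv_f_def by (rule linear_comp_sum[OF lin, symmetric])
      also have "(\<Sum>k\<in>UNIV. (if i = ?i0 \<and> k = ?i0 then gx else 0) * v $ k) = (if i = ?i0 then gx * v $ ?i0 else 0)"
      proof -
        have "(\<Sum>k\<in>UNIV. (if i = ?i0 \<and> k = ?i0 then gx else 0) * v $ k)
            = (\<Sum>k\<in>UNIV. (if k = ?i0 then (if i = ?i0 then gx * v $ ?i0 else 0) else 0))"
          by (rule sum.cong) auto
        also have "\<dots> = (if i = ?i0 then gx * v $ ?i0 else 0)" by simp
        finally show ?thesis .
      qed
      finally show "(\<Sum>k\<in>UNIV. A i k * v $ k) = (if i = ?i0 then - gu else 0)"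
        using c0 by (cases "i = ?i0") simp_all
    qed
    have gu0: "- gu \<noteq> 0"
    proof (cases c)
      case Flow thus ?thesis unfolding gu_def by simp
    next
      case Activation
      hence "x $ ?i0 < xT" using ctrl xX uJ F0 by auto
      thus ?thesis using Activation unfolding gu_def by simp
    next
      case Inhibition
      hence "0 < x $ ?i0" using ctrl xX uJ F0 by auto
      thus ?thesis using Inhibition unfolding gu_def by simp
    qed
    have "minor_val A ?i0 j = minor_val (pderiv_f f' x) ?i0 j"
      by (rule minor_val_row_indep) (simp add: A_def)
    also have "\<dots> \<noteq> 0"
      by (rule minor_val_nonzero[OF sign_pattern _ nonzero not_mixed]) (use const_sign xX in auto)
    finally have mv: "minor_val A ?i0 j \<noteq> 0" .
    show ?thesis using cramer_minor[of A "\<lambda>k. v $ k", OF sys gu0 mv] v_def by simp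
  qed
  show "\<not> quasi_adaptive I xs' j \<and> \<not> biphasic I xs' j"
  proof
    show "\<not> quasi_adaptive I xs' j" unfolding quasi_adaptive_def using nz by auto
    show "\<not> biphasic I xs' j"
    proof
      assume "biphasic I xs' j"
      then obtain u1 u2 where u: "u1 \<in> I" "u2 \<in> I" and neg: "xs' u1 $ j * xs' u2 $ j < 0"
        unfolding biphasic_def by auto
      let ?h = "\<lambda>t. xs' t $ j"
      have hc: "continuous_on I ?h"
        by (rule linear_continuous_on_compose[OF xsc bounded_linear.linear[OF bounded_linear_vec_nth]])
      have "connected (?h ` I)"
        using connected_continuous_image[OF hc] Iint is_interval_connected by blast
      hence ii: "is_interval (?h ` I)" using is_interval_connected_1 by blast
      have a: "?h u1 \<in> ?h ` I" "?h u2 \<in> ?h ` I" using u by auto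
      have "0 \<in> ?h ` I"
        using neg unfolding mult_less_0_iff
      proof
        assume "0 < ?h u1 \<and> ?h u2 < 0"
        thus ?thesis using mem_is_interval_1_I[OF ii a(2) a(1)] by simp
      next
        assume "?h u1 < 0 \<and> 0 < ?h u2"
        thus ?thesis using mem_is_interval_1_I[OF ii a(1) a(2)] by simp
      qed
      thus False using nz by auto
    qed
  qed
qed

end
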